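(* Let $n\geq2$, let $\lambda_1,\dots,\lambda_n\geq 0$ with $\sum_{i=1}^n\lambda_i=1$, let $\rho>0$ and let $z$ be a harmonic function in a neighborhood of the ball $B_\rho(0)\subset\mathbb{R}^n$ satisfying $z(0)=0$, $\nabla z(0)=0$, $D^2z(0)=0$. If the function $$w(x)=\sqrt{\tfrac12\sum_{i=1}^n\lambda_i x_i^2+z(x)}$$ is (well defined and) convex in $B_\rho(0)$, then $z\equiv 0$. *)

theory Defs
  imports "HOL-Analysis.Analysis"
begin

definition grad :: "(real^'n \<Rightarrow> real) \<Rightarrow> real^'n \<Rightarrow> real^'n" where
  "grad f x = (\<chi> i. frechet_derivative f (at x) (axis i 1))"

definition hess :: "(real^'n \<Rightarrow> real) \<Rightarrow> real^'n \<Rightarrow> real^'n^'n" where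
  "hess f x = (\<chi> i j. frechet_derivative (grad f) (at x) (axis j 1) $ i)"

definition laplacian :: "(real^'n \<Rightarrow> real) \<Rightarrow> real^'n \<Rightarrow> real" where
  "laplacian f x = (\<Sum>i\<in>UNIV. hess f x $ i $ i)"

definition harmonic_on :: "(real^'n \<Rightarrow> real) \<Rightarrow> (real^'n) set \<Rightarrow> bool" where
  "harmonic_on f S \<longleftrightarrow> open S \<and> f differentiable_on S \<and> grad f differentiable_on S
     \<and> continuous_on S (hess f) \<and> (\<forall>x\<in>S. laplacian f x = 0)"

end

theory Submission
  imports Defs
begin

lemma line_deriv_real:
  fixes f :: "real^'n \<Rightarrow> real"
  assumes "(f has_derivative D) (at (y + t0 *\<^sub>R d))"
  shows "((\<lambda>t. f (y + t *\<^sub>R d)) has_real_derivative D d) (at t0)"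
proof -
  have p: "((\<lambda>t. y + t *\<^sub>R d) has_derivative (\<lambda>t. t *\<^sub>R d)) (at t0)"
    by (auto intro!: derivative_eq_intros)
  have "((f \<circ> (\<lambda>t. y + t *\<^sub>R d)) has_derivative (D \<circ> (\<lambda>t. t *\<^sub>R d))) (at t0)"
    by (rule diff_chain_at[OF p assms])
  moreover have "bounded_linear D" using assms has_derivative_bounded_linear by blast
  then have "(D \<circ> (\<lambda>t. t *\<^sub>R d)) = (*) (D d)"
    by (auto simp: fun_eq_iff linear_simps bounded_linear.linear)
  ultimately show ?thesis by (simp add: has_field_derivative_def o_def)
qed

lemma line_deriv_vec:
  fixes g :: "real^'n \<Rightarrow> real^'m"
  assumes "(g has_derivative G) (at (y + t0 *\<^sub>R d))"
  shows "((\<lambda>t. g (y + t *\<^sub>R d) $ i) has_real_derivative (G d $ i)) (at t0)"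
proof -
  have p: "((\<lambda>t. y + t *\<^sub>R d) has_derivative (\<lambda>t. t *\<^sub>R d)) (at t0)"
    by (auto intro!: derivative_eq_intros)
  have "((g \<circ> (\<lambda>t. y + t *\<^sub>R d)) has_derivative (G \<circ> (\<lambda>t. t *\<^sub>R d))) (at t0)"
    by (rule diff_chain_at[OF p assms])
  from bounded_linear.has_derivative[OF bounded_linear_vec_nth[of i] this]
  have "((\<lambda>t. g (y + t *\<^sub>R d) $ i) has_derivative (\<lambda>t. G (t *\<^sub>R d) $ i)) (at t0)"
    by (simp add: o_def)
  moreover have "bounded_linear G" using assms has_derivative_bounded_linear by blast
  then have "(\<lambda>t. G (t *\<^sub>R d) $ i) = (*) (G d $ i)"
    by (auto simp: fun_eq_iff linear_simps bounded_linear.linear)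
  ultimately show ?thesis by (simp add: has_field_derivative_def)
qed

lemma second_pos_incr:
  fixes g g' :: "real \<Rightarrow> real"
  assumes "\<delta> > 0" and d: "\<And>t. \<bar>t\<bar> < \<delta> \<Longrightarrow> (g has_real_derivative g' t) (at t)"
    and d2: "(g' has_real_derivative a) (at 0)" and "g' 0 = 0" and "a > 0"
  shows "\<exists>e>0. \<forall>t. 0 < t \<and> t < e \<longrightarrow> g t > g 0"
proof -
  obtain d0 where d0: "d0 > 0" "\<forall>h>0. h < d0 \<longrightarrow> g' 0 < g' (0 + h)"
    using DERIV_pos_inc_right[OF d2 \<open>a > 0\<close>] by blast
  show ?thesis
  proof (intro exI[of _ "min d0 \<delta>"] conjI allI impI)
    show "min d0 \<delta> > 0" using d0 \<open>\<delta> > 0\<close> by simp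
    fix t assume t: "0 < t \<and> t < min d0 \<delta>"
    have "\<exists>z. 0 < z \<and> z < t \<and> g t - g 0 = (t - 0) * g' z"
      by (rule MVT2) (use t in \<open>auto intro!: d\<close>)
    then obtain z where z: "0 < z" "z < t" "g t - g 0 = t * g' z" by auto
    have "g' z > 0" using d0(2) z t \<open>g' 0 = 0\<close> by force
    then show "g t > g 0" using z t by (simp add: algebra_simps)
  qed
qed

lemma min_second_nonneg:
  fixes g g' :: "real \<Rightarrow> real"
  assumes "\<delta> > 0" and d: "\<And>t. \<bar>t\<bar> < \<delta> \<Longrightarrow> (g has_real_derivative g' t) (at t)"
    and d2: "(g' has_real_derivative a) (at 0)"
    and mn: "\<And>t. \<bar>t\<bar> < \<delta> \<Longrightarrow> g 0 \<le> g t"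
  shows "a \<ge> 0"
proof (rule ccontr)
  assume "\<not> a \<ge> 0"
  have "g' 0 = 0"
    by (rule DERIV_local_min[OF d[of 0] \<open>\<delta> > 0\<close>]) (use \<open>\<delta> > 0\<close> mn in auto)
  have "\<exists>e>0. \<forall>t. 0 < t \<and> t < e \<longrightarrow> (\<lambda>t. - g t) t > (\<lambda>t. - g t) 0"
    by (rule second_pos_incr[of \<delta> _ "\<lambda>t. - g' t" "- a"])
       (use \<open>\<delta> > 0\<close> \<open>g' 0 = 0\<close> \<open>\<not> a \<ge> 0\<close> in \<open>auto intro!: derivative_eq_intros d d2\<close>)
  then obtain e where "e > 0" "\<forall>t. 0 < t \<and> t < e \<longrightarrow> g t < g 0" by auto
  then have "g (min e \<delta> / 2) < g 0" using \<open>\<delta> > 0\<close> by auto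
  moreover have "g 0 \<le> g (min e \<delta> / 2)" using mn \<open>\<delta> > 0\<close> \<open>e > 0\<close> by auto
  ultimately show False by simp
qed

lemma norm_line_sq:
  fixes y q :: "real^'n"
  shows "norm (y + t *\<^sub>R axis i 1 - q) ^ 2 = norm (y - q) ^ 2 + 2 * t * (y - q) $ i + t ^ 2"
proof -
  have "y + t *\<^sub>R axis i 1 - q = (y - q) + t *\<^sub>R axis i 1" by simp
  then show ?thesis
    by (simp only: power2_norm_eq_inner) (simp add: inner_add_left inner_add_right inner_axis inner_axis' inner_commute power2_eq_square algebra_simps)
qed

lemma no_interior_min:
  fixes u :: "real^'n \<Rightarrow> real" and y q :: "real^'n"
  assumes S: "open S" "y \<in> S" and du: "u differentiable_on S" and dg: "grad u differentiable_on S"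
    and lap: "laplacian u y = 0" and "\<epsilon> > 0" "\<alpha> > 0"
    and big: "2 * \<alpha> * norm (y - q) ^ 2 > real CARD('n)"
    and "\<delta> > 0"
    and mn: "\<forall>x\<in>ball y \<delta>. u y - \<epsilon> * exp (- \<alpha> * norm (y - q) ^ 2) \<le> u x - \<epsilon> * exp (- \<alpha> * norm (x - q) ^ 2)"
  shows False
proof -
  obtain \<delta>S where "\<delta>S > 0" "ball y \<delta>S \<subseteq> S" using S open_contains_ball by blast
  define \<delta>' where "\<delta>' = min \<delta> \<delta>S"
  have "\<delta>' > 0" using \<open>\<delta>S > 0\<close> \<open>\<delta> > 0\<close> by (simp add: \<delta>'_def)
  define r2 where "r2 = norm (y - q) ^ 2"
  define E where "E = exp (- \<alpha> * r2)"
  define a where "a i = hess u y $ i $ i - \<epsilon> * (E * (4 * \<alpha>^2 * ((y - q) $ i)^2 - 2 * \<alpha>))" for i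
  have ai: "a i \<ge> 0" for i
  proof -
    define c where "c = (y - q) $ i"
    define e where "e = (axis i 1 :: real^'n)"
    define g where "g t = u (y + t *\<^sub>R e) - \<epsilon> * exp (- \<alpha> * (r2 + 2 * t * c + t^2))" for t
    define g' where "g' t = grad u (y + t *\<^sub>R e) $ i - \<epsilon> * (exp (- \<alpha> * (r2 + 2 * t * c + t^2)) * (- \<alpha> * (2 * c + 2 * t)))" for t
    have inb: "y + t *\<^sub>R e \<in> ball y \<delta>'" if "\<bar>t\<bar> < \<delta>'" for t
      using that by (simp add: e_def dist_norm)
    have D1: "(g has_real_derivative g' t) (at t)" if "\<bar>t\<bar> < \<delta>'" for t
    proof -
      have "y + t *\<^sub>R e \<in> S" using inb[OF that] \<open>ball y \<delta>S \<subseteq> S\<close> \<delta>'_def by auto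
      then have "u differentiable at (y + t *\<^sub>R e)" using du S(1) differentiable_on_eq_differentiable_at by blast
      then have "(u has_derivative frechet_derivative u (at (y + t *\<^sub>R e))) (at (y + t *\<^sub>R e))"
        using frechet_derivative_works by blast
      from line_deriv_real[OF this]
      have 1: "((\<lambda>s. u (y + s *\<^sub>R e)) has_real_derivative grad u (y + t *\<^sub>R e) $ i) (at t)"
        by (simp add: grad_def e_def)
      have 2: "((\<lambda>s. \<epsilon> * exp (- \<alpha> * (r2 + 2 * s * c + s^2))) has_real_derivative
          \<epsilon> * (exp (- \<alpha> * (r2 + 2 * t * c + t^2)) * (- \<alpha> * (2 * c + 2 * t)))) (at t)"
        by (rule derivative_eq_intros refl | simp add: algebra_simps)+
      show ?thesis unfolding g_def g'_def by (rule DERIV_diff[OF 1 2])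
    qed
    have D2: "(g' has_real_derivative a i) (at 0)"
    proof -
      have "grad u differentiable at y" using dg S differentiable_on_eq_differentiable_at by blast
      then have "(grad u has_derivative frechet_derivative (grad u) (at y)) (at y)"
        using frechet_derivative_works by blast
      from line_deriv_vec[of "grad u" _ y 0 e i, simplified, OF this]
      have 1: "((\<lambda>s. grad u (y + s *\<^sub>R e) $ i) has_real_derivative hess u y $ i $ i) (at 0)"
        by (simp add: hess_def e_def)
      have 2: "((\<lambda>s. \<epsilon> * (exp (- \<alpha> * (r2 + 2 * s * c + s^2)) * (- \<alpha> * (2 * c + 2 * s)))) has_real_derivative
          \<epsilon> * (E * (4 * \<alpha>^2 * c^2 - 2 * \<alpha>))) (at 0)"
        by (rule derivative_eq_intros refl | simp add: E_def algebra_simps power2_eq_square)+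
      show ?thesis unfolding g'_def a_def c_def[symmetric] by (rule DERIV_diff[OF 1 2])
    qed
    have mn': "g 0 \<le> g t" if "\<bar>t\<bar> < \<delta>'" for t
    proof -
      have "y + t *\<^sub>R e \<in> ball y \<delta>" using inb[OF that] \<delta>'_def by auto
      with mn have "u y - \<epsilon> * exp (- \<alpha> * norm (y - q) ^ 2) \<le> u (y + t *\<^sub>R e) - \<epsilon> * exp (- \<alpha> * norm (y + t *\<^sub>R e - q) ^ 2)"
        by blast
      then show ?thesis unfolding g_def e_def c_def r2_def norm_line_sq by simp
    qed
    show ?thesis by (rule min_second_nonneg[OF \<open>\<delta>' > 0\<close> D1 D2 mn'])
  qed
  have sq: "(\<Sum>i\<in>UNIV. ((y - q) $ i)^2) = r2"
    unfolding r2_def power2_norm_eq_inner inner_vec_def by (simp add: power2_eq_square)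
  have "(\<Sum>i\<in>UNIV. a i) = laplacian u y - \<epsilon> * E * (4 * \<alpha>^2 * r2 - 2 * \<alpha> * real CARD('n))"
    unfolding a_def laplacian_def
    by (simp add: sum_subtractf sum_distrib_left sum_distrib_right sq[symmetric] algebra_simps sum.distrib)
  also have "\<dots> < 0"
  proof -
    have "4 * \<alpha>^2 * r2 - 2 * \<alpha> * real CARD('n) = 2 * \<alpha> * (2 * \<alpha> * r2 - real CARD('n))"
      by (simp add: algebra_simps power2_eq_square)
    also have "\<dots> > 0" using big \<open>\<alpha> > 0\<close> by (simp add: r2_def)
    finally show ?thesis using lap \<open>\<epsilon> > 0\<close> by (simp add: E_def)
  qed
  finally have "(\<Sum>i\<in>UNIV. a i) < 0" .
  moreover have "(\<Sum>i\<in>UNIV. a i) \<ge> 0" by (rule sum_nonneg) (use ai in auto)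
  ultimately show False by simp
qed

lemma hopf_contra:
  fixes u :: "real^'n \<Rightarrow> real" and p q :: "real^'n"
  assumes harm: "harmonic_on u S" and B: "open B" "B \<subseteq> S" "cball q R \<subseteq> B"
    and nn: "\<forall>x\<in>B. u x \<ge> 0" and pq: "norm (p - q) = R" and up: "u p = 0" and uq: "u q > 0"
    and "R > 0"
  shows False
proof -
  have S: "open S" "u differentiable_on S" "grad u differentiable_on S" "\<forall>x\<in>S. laplacian u x = 0"
    using harm unfolding harmonic_on_def by auto
  have contS: "continuous_on S u" using S(2) differentiable_imp_continuous_on by blast
  have "q \<in> S" using B \<open>R > 0\<close> centre_in_cball[of q R] by (meson less_imp_le subsetD)
  then have "continuous (at q) u" using contS S(1) continuous_on_eq_continuous_at by blast
  then obtain \<delta> where "\<delta> > 0" and \<delta>: "\<forall>x. dist x q < \<delta> \<longrightarrow> dist (u x) (u q) < u q / 2"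
    unfolding continuous_at_eps_delta using uq by (meson half_gt_zero)
  define m where "m = u q / 2"
  have "m > 0" using uq m_def by simp
  define r1 where "r1 = min \<delta> R / 2"
  have r1: "r1 > 0" "r1 < R" "r1 < \<delta>" using \<open>\<delta> > 0\<close> \<open>R > 0\<close> by (auto simp: r1_def)
  have um: "u x \<ge> m" if "norm (x - q) \<le> r1" for x
  proof -
    have "dist x q < \<delta>" using that r1 by (simp add: dist_norm)
    then have "\<bar>u x - u q\<bar> < u q / 2" using \<delta> by (auto simp: dist_real_def)
    then show ?thesis unfolding m_def by arith
  qed
  define \<alpha> where "\<alpha> = real CARD('n) / r1^2 + 1"
  have "\<alpha> > 0" using r1 by (simp add: \<alpha>_def add_pos_nonneg)
  have big: "2 * \<alpha> * norm (y - q)^2 > real CARD('n)" if "r1 \<le> norm (y - q)" for y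
  proof -
    have "r1^2 \<le> norm (y - q)^2" using that r1 by (simp add: power_mono)
    then have "2 * \<alpha> * r1^2 \<le> 2 * \<alpha> * norm (y - q)^2" using \<open>\<alpha> > 0\<close> by simp
    moreover have "2 * \<alpha> * r1^2 = 2 * real CARD('n) + 2 * r1^2" using r1 by (simp add: \<alpha>_def field_simps)
    moreover have "r1^2 > 0" using r1 by simp
    ultimately show ?thesis by linarith
  qed
  define \<epsilon> where "\<epsilon> = m"
  define C where "C = exp (- \<alpha> * R^2)"
  define h where "h x = u x - \<epsilon> * (exp (- \<alpha> * norm (x - q)^2) - C)" for x
  define K where "K = cball q R - ball q r1"
  have Kmem: "x \<in> K \<longleftrightarrow> r1 \<le> norm (x - q) \<and> norm (x - q) \<le> R" for x
    by (auto simp: K_def dist_norm norm_minus_commute)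
  have "K \<subseteq> S" using B K_def by auto
  have "compact K" unfolding K_def by (intro compact_diff) auto
  have "p \<in> K" using Kmem pq r1 by auto
  have "continuous_on K h" unfolding h_def
    by (intro continuous_intros continuous_on_subset[OF contS \<open>K \<subseteq> S\<close>])
  then obtain y where "y \<in> K" and ymin: "\<forall>x\<in>K. h y \<le> h x"
    using continuous_attains_inf[OF \<open>compact K\<close>] \<open>p \<in> K\<close> by blast
  have hK: "h x \<ge> 0" if "x \<in> K" for x
  proof -
    have "h y \<ge> 0"
    proof (cases "norm (y - q) = r1")
      case True
      have "exp (- \<alpha> * norm (y - q)^2) \<le> 1" using \<open>\<alpha> > 0\<close> by simp
      moreover have "C > 0" by (simp add: C_def)
      ultimately have "exp (- \<alpha> * norm (y - q)^2) - C \<le> 1" by linarith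
      then have "\<epsilon> * (exp (- \<alpha> * norm (y - q)^2) - C) \<le> \<epsilon>" using \<open>m > 0\<close> \<epsilon>_def
        by (simp add: mult_left_le)
      then show ?thesis using um[of y] True by (simp add: h_def \<epsilon>_def)
    next
      case False
      show ?thesis
      proof (cases "norm (y - q) = R")
        case True
        have "y \<in> B" using \<open>y \<in> K\<close> B K_def by auto
        then show ?thesis using nn True by (simp add: h_def C_def)
      next
        case False2: False
        have lt: "r1 < norm (y - q)" "norm (y - q) < R" using False False2 \<open>y \<in> K\<close> Kmem by auto
        define \<delta>2 where "\<delta>2 = min (norm (y - q) - r1) (R - norm (y - q))"
        have "\<delta>2 > 0" using lt by (simp add: \<delta>2_def)
        have "ball y \<delta>2 \<subseteq> K"
        proof
          fix x assume "x \<in> ball y \<delta>2"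
          then have "norm (x - y) < \<delta>2" by (simp add: dist_norm norm_minus_commute)
          moreover have "norm (x - q) \<le> norm (x - y) + norm (y - q)"
            using norm_triangle_ineq[of "x - y" "y - q"] by simp
          moreover have "norm (y - q) \<le> norm (y - x) + norm (x - q)"
            using norm_triangle_ineq[of "y - x" "x - q"] by simp
          ultimately show "x \<in> K" unfolding Kmem \<delta>2_def by (auto simp: norm_minus_commute)
        qed
        have "False"
        proof (rule no_interior_min[of S y u \<epsilon> \<alpha> q \<delta>2])
          show "open S" "y \<in> S" "u differentiable_on S" "grad u differentiable_on S"
            using S \<open>K \<subseteq> S\<close> \<open>y \<in> K\<close> by auto
          show "laplacian u y = 0" using S \<open>K \<subseteq> S\<close> \<open>y \<in> K\<close> by auto
          show "\<epsilon> > 0" "\<alpha> > 0" "\<delta>2 > 0" using \<open>m > 0\<close> \<open>\<alpha> > 0\<close> \<open>\<delta>2 > 0\<close> by (auto simp: \<epsilon>_def)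
          show "2 * \<alpha> * norm (y - q) ^ 2 > real CARD('n)" using big lt by auto
          show "\<forall>x\<in>ball y \<delta>2. u y - \<epsilon> * exp (- \<alpha> * norm (y - q) ^ 2) \<le> u x - \<epsilon> * exp (- \<alpha> * norm (x - q) ^ 2)"
            using ymin \<open>ball y \<delta>2 \<subseteq> K\<close> by (auto simp: h_def algebra_simps)
        qed
        then show ?thesis ..
      qed
    qed
    then show ?thesis using ymin that by force
  qed
  define f where "f t = h (p + t *\<^sub>R (q - p))" for t
  have nsq: "norm (p + t *\<^sub>R (q - p) - q)^2 = (1 - t)^2 * R^2" for t
  proof -
    have "p + t *\<^sub>R (q - p) - q = (1 - t) *\<^sub>R (p - q)" by (simp add: algebra_simps)
    then show ?thesis using pq by (simp add: power_mult_distrib)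
  qed
  have f_eq: "f t = u (p + t *\<^sub>R (q - p)) - \<epsilon> * (exp (- \<alpha> * ((1 - t)^2 * R^2)) - C)" for t
    by (simp add: f_def h_def nsq)
  have "p \<in> B" using \<open>p \<in> K\<close> K_def B by auto
  have "p \<in> S" using \<open>p \<in> B\<close> B by auto
  then have "u differentiable at p" using S differentiable_on_eq_differentiable_at by blast
  then have dp: "(u has_derivative frechet_derivative u (at p)) (at p)" using frechet_derivative_works by blast
  have "eventually (\<lambda>x. u p \<le> u x) (at p)"
    using eventually_at_topological[of "\<lambda>x. u p \<le> u x" p] B(1) \<open>p \<in> B\<close> nn up by auto
  from has_derivative_local_min[OF dp this] have D0: "frechet_derivative u (at p) = (\<lambda>h. 0)" .
  from line_deriv_real[of u "frechet_derivative u (at p)" p 0 "q - p", simplified, OF dp]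
  have 1: "((\<lambda>t. u (p + t *\<^sub>R (q - p))) has_real_derivative 0) (at 0)" by (simp add: D0)
  have 2: "((\<lambda>t. \<epsilon> * (exp (- \<alpha> * ((1 - t)^2 * R^2)) - C)) has_real_derivative
       \<epsilon> * (exp (- \<alpha> * R^2) * (2 * \<alpha> * R^2))) (at 0)"
    by (rule derivative_eq_intros refl | simp add: algebra_simps power2_eq_square)+
  have "(f has_real_derivative (0 - \<epsilon> * (exp (- \<alpha> * R^2) * (2 * \<alpha> * R^2)))) (at 0)"
    unfolding f_eq[abs_def] by (rule DERIV_diff[OF 1 2])
  moreover have "0 - \<epsilon> * (exp (- \<alpha> * R^2) * (2 * \<alpha> * R^2)) < 0"
    using \<open>m > 0\<close> \<open>\<alpha> > 0\<close> \<open>R > 0\<close> by (simp add: \<epsilon>_def)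
  ultimately obtain d where "d > 0" and d: "\<forall>t>0. t < d \<longrightarrow> f 0 > f (0 + t)"
    using DERIV_neg_dec_right by blast
  define t where "t = min d (1 - r1 / R) / 2"
  have "r1 / R < 1" using r1 by simp
  then have t: "t > 0" "t < d" "t \<le> 1 - r1 / R" using \<open>d > 0\<close> by (auto simp: t_def)
  have "f 0 = 0" using up by (simp add: f_def h_def pq C_def)
  then have "f t < 0" using d t by auto
  moreover have "p + t *\<^sub>R (q - p) \<in> K"
  proof -
    have "norm (p + t *\<^sub>R (q - p) - q) = (1 - t) * R"
    proof -
      have "p + t *\<^sub>R (q - p) - q = (1 - t) *\<^sub>R (p - q)" by (simp add: algebra_simps)
      moreover have "r1 / R > 0" using r1 by simp
      ultimately show ?thesis using t pq by simp
    qed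
    moreover have "r1 \<le> (1 - t) * R"
    proof -
      have "t * R \<le> (1 - r1 / R) * R" using t \<open>R > 0\<close> by (simp add: mult_right_mono)
      then show ?thesis using \<open>R > 0\<close> by (simp add: algebra_simps)
    qed
    moreover have "(1 - t) * R \<le> R" using t \<open>R > 0\<close> by simp
    ultimately show ?thesis unfolding Kmem by simp
  qed
  then have "f t \<ge> 0" using hK by (simp add: f_def)
  ultimately show False by simp
qed

lemma lin_expand:
  fixes f :: "real^'n \<Rightarrow> real"
  assumes "linear f"
  shows "f x = (\<Sum>j\<in>UNIV. x $ j * f (axis j 1))"
proof -
  have "f x = f (\<Sum>j\<in>UNIV. x $ j *\<^sub>R axis j 1)"
    using basis_expansion[of x] by (simp add: scalar_mult_eq_scaleR)
  also have "\<dots> = (\<Sum>j\<in>UNIV. x $ j * f (axis j 1))"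
    by (simp add: linear_sum[OF assms] linear_scale[OF assms])
  finally show ?thesis .
qed

lemma z_nonneg:
  fixes lam :: "'n::finite \<Rightarrow> real" and z :: "real^'n \<Rightarrow> real"
  assumes S: "open S" "ball 0 \<rho> \<subseteq> S" and dz: "z differentiable_on S" and dg: "grad z differentiable_on S"
    and z0: "z 0 = 0" and g0: "grad z 0 = 0" and h0: "hess z 0 = 0"
    and qnn: "\<forall>x\<in>ball 0 \<rho>. (1/2) * (\<Sum>i\<in>UNIV. lam i * (x $ i)^2) + z x \<ge> 0"
    and cvx: "convex_on (ball 0 \<rho>) (\<lambda>x. sqrt ((1/2) * (\<Sum>i\<in>UNIV. lam i * (x $ i)^2) + z x))"
    and x: "x \<in> ball 0 \<rho>"
  shows "z x \<ge> 0"
proof (rule ccontr)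
  assume "\<not> z x \<ge> 0"
  define c where "c = z x"
  have "c < 0" using \<open>\<not> z x \<ge> 0\<close> c_def by simp
  define P where "P y = (1/2) * (\<Sum>i\<in>UNIV. lam i * (y $ i)^2)" for y :: "real^'n"
  have Pt: "P (t *\<^sub>R y) = t^2 * P y" for t y
    by (simp add: P_def power_mult_distrib sum_distrib_left algebra_simps)
  have "norm x < \<rho>" using x by (simp add: dist_norm)
  then have "\<rho> > 0" using norm_ge_zero[of x] by linarith
  have inb: "t *\<^sub>R x \<in> ball 0 \<rho>" if "0 \<le> t" "t \<le> 1" for t
  proof -
    have "norm (t *\<^sub>R x) \<le> norm x" using that by (simp add: mult_left_le_one_le)
    then show ?thesis using x by simp
  qed
  have ray: "z (t *\<^sub>R x) \<le> t^2 * c" if "0 \<le> t" "t \<le> 1" for t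
  proof -
    have "0 \<in> ball 0 \<rho>" using \<open>\<rho> > 0\<close> by simp
    from convex_onD[OF cvx that this x]
    have "sqrt (P (t *\<^sub>R x) + z (t *\<^sub>R x)) \<le> t * sqrt (P x + z x)"
      by (simp add: P_def z0)
    moreover have "P (t *\<^sub>R x) + z (t *\<^sub>R x) \<ge> 0" using bspec[OF qnn inb[OF that]] by (simp only: P_def)
    moreover have "P x + z x \<ge> 0" using bspec[OF qnn x] by (simp only: P_def)
    ultimately have "P (t *\<^sub>R x) + z (t *\<^sub>R x) \<le> (t * sqrt (P x + z x))^2"
      by (metis real_sqrt_le_iff real_sqrt_pow2 sqrt_le_D)
    also have "\<dots> = t^2 * (P x + z x)" using \<open>P x + z x \<ge> 0\<close> by (simp add: power_mult_distrib)
    finally show ?thesis using Pt by (simp add: c_def algebra_simps)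
  qed
  obtain \<delta> where "\<delta> > 0" and \<delta>: "ball 0 \<delta> \<subseteq> S"
    using S \<open>\<rho> > 0\<close> by (meson centre_in_ball open_contains_ball subsetD)
  define \<delta>' where "\<delta>' = \<delta> / (norm x + 1)"
  have nx1: "norm x + 1 > 0" using norm_ge_zero[of x] by linarith
  have "\<delta>' > 0" using \<open>\<delta> > 0\<close> nx1 by (simp add: \<delta>'_def)
  have inS: "t *\<^sub>R x \<in> S" if "\<bar>t\<bar> < \<delta>'" for t
  proof -
    have "\<bar>t\<bar> * norm x \<le> \<bar>t\<bar> * (norm x + 1)" by (simp add: mult_left_mono)
    also have "\<dots> < \<delta>" using that \<open>\<delta> > 0\<close> nx1 by (simp add: \<delta>'_def pos_less_divide_eq)
    finally show ?thesis using \<delta> by auto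
  qed
  define g where "g t = z (t *\<^sub>R x) - (c / 2) * t^2" for t
  define g' where "g' t = (\<Sum>j\<in>UNIV. x $ j * grad z (t *\<^sub>R x) $ j) - c * t" for t
  have D1: "(g has_real_derivative g' t) (at t)" if "\<bar>t\<bar> < \<delta>'" for t
  proof -
    have "z differentiable at (t *\<^sub>R x)" using inS[OF that] dz S(1) differentiable_on_eq_differentiable_at by blast
    then have "(z has_derivative frechet_derivative z (at (t *\<^sub>R x))) (at (t *\<^sub>R x))"
      using frechet_derivative_works by blast
    then have dd: "(z has_derivative frechet_derivative z (at (t *\<^sub>R x))) (at (0 + t *\<^sub>R x))"
      by simp
    from line_deriv_real[OF dd]
    have "((\<lambda>s. z (s *\<^sub>R x)) has_real_derivative frechet_derivative z (at (t *\<^sub>R x)) x) (at t)" by simp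
    moreover have "frechet_derivative z (at (t *\<^sub>R x)) x = (\<Sum>j\<in>UNIV. x $ j * grad z (t *\<^sub>R x) $ j)"
      using lin_expand[OF bounded_linear.linear[OF has_derivative_bounded_linear[OF dd]], of x]
      by (simp add: grad_def)
    ultimately have 1: "((\<lambda>s. z (s *\<^sub>R x)) has_real_derivative (\<Sum>j\<in>UNIV. x $ j * grad z (t *\<^sub>R x) $ j)) (at t)"
      by simp
    have 2: "((\<lambda>s. (c / 2) * s^2) has_real_derivative c * t) (at t)"
      by (rule derivative_eq_intros refl | simp)+
    show ?thesis unfolding g_def g'_def by (rule DERIV_diff[OF 1 2])
  qed
  have D2: "(g' has_real_derivative (- c)) (at 0)"
  proof -
    have "0 \<in> S" using inS[of 0] \<open>\<delta>' > 0\<close> by simp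
    then have "grad z differentiable at 0" using dg S(1) differentiable_on_eq_differentiable_at by blast
    then have "(grad z has_derivative frechet_derivative (grad z) (at 0)) (at 0)"
      using frechet_derivative_works by blast
    then have dd: "(grad z has_derivative frechet_derivative (grad z) (at 0)) (at (0 + 0 *\<^sub>R x))"
      by simp
    define G where "G = frechet_derivative (grad z) (at 0)"
    have Gl: "linear (\<lambda>v. G v $ j)" for j
      using has_derivative_bounded_linear[OF dd] unfolding G_def
      by (intro bounded_linear.linear bounded_linear_compose[OF bounded_linear_vec_nth]) auto
    have Gx: "G x $ j = 0" for j
      using lin_expand[OF Gl[of j], of x] h0 unfolding hess_def G_def
      by (simp add: vec_eq_iff)
    have "((\<lambda>s. grad z (0 + s *\<^sub>R x) $ j) has_real_derivative G x $ j) (at 0)" for j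
      using line_deriv_vec[OF dd] unfolding G_def .
    then have "((\<lambda>s. grad z (s *\<^sub>R x) $ j) has_real_derivative 0) (at 0)" for j
      using Gx by simp
    then have 1: "((\<lambda>s. \<Sum>j\<in>UNIV. x $ j * grad z (s *\<^sub>R x) $ j) has_real_derivative 0) (at 0)"
      by (auto intro!: derivative_eq_intros)
    have 2: "((\<lambda>s. c * s) has_real_derivative c) (at 0)"
      by (rule derivative_eq_intros refl | simp)+
    show ?thesis using DERIV_diff[OF 1 2] unfolding g'_def by simp
  qed
  have "g' 0 = 0" using g0 by (simp add: g'_def)
  obtain e where "e > 0" and e: "\<forall>t. 0 < t \<and> t < e \<longrightarrow> g t > g 0"
    using second_pos_incr[OF \<open>\<delta>' > 0\<close> D1 D2 \<open>g' 0 = 0\<close>] \<open>c < 0\<close> by auto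
  define t where "t = min e 1 / 2"
  have t: "0 < t" "t < e" "t \<le> 1" using \<open>e > 0\<close> by (auto simp: t_def)
  have "g 0 = 0" by (simp add: g_def z0)
  then have "g t > 0" using e t by auto
  moreover have "g t \<le> (c / 2) * t^2" using ray[of t] t by (simp add: g_def algebra_simps)
  moreover have "(c / 2) * t^2 < 0" using \<open>c < 0\<close> t by (simp add: mult_neg_pos)
  ultimately show False by simp
qed

theorem lemma2p1:
  fixes lam :: "'n::finite \<Rightarrow> real" and \<rho> :: real and z :: "real^'n \<Rightarrow> real"
  assumes "CARD('n) \<ge> 2"
    and "\<forall>i. lam i \<ge> 0" and "(\<Sum>i\<in>UNIV. lam i) = 1"
    and "\<rho> > 0"
    and "\<exists>S. open S \<and> ball 0 \<rho> \<subseteq> S \<and> harmonic_on z S"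
    and "z 0 = 0" and "grad z 0 = 0" and "hess z 0 = 0"
    and "\<forall>x\<in>ball 0 \<rho>. (1/2) * (\<Sum>i\<in>UNIV. lam i * (x $ i)^2) + z x \<ge> 0"
    and "convex_on (ball 0 \<rho>) (\<lambda>x. sqrt ((1/2) * (\<Sum>i\<in>UNIV. lam i * (x $ i)^2) + z x))"
  shows "\<forall>x\<in>ball 0 \<rho>. z x = 0"
proof
  fix x0 :: "real^'n" assume x0: "x0 \<in> ball 0 \<rho>"
  obtain S where S: "open S" "ball 0 \<rho> \<subseteq> S" "harmonic_on z S" using assms(5) by blast
  have dz: "z differentiable_on S" and dg: "grad z differentiable_on S"
    using S(3) unfolding harmonic_on_def by auto
  have nn: "\<forall>x\<in>ball 0 \<rho>. z x \<ge> 0"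
    using z_nonneg[OF S(1,2) dz dg assms(6,7,8,9,10)] by blast
  show "z x0 = 0"
  proof (rule ccontr)
    assume "z x0 \<noteq> 0"
    then have zx0: "z x0 > 0" using nn x0 by force
    have "x0 \<noteq> 0" using zx0 assms(6) by auto
    have nx0: "norm x0 < \<rho>" using x0 by (simp add: dist_norm)
    have inb: "t *\<^sub>R x0 \<in> ball 0 \<rho>" if "0 \<le> t" "t \<le> 1" for t
    proof -
      have "norm (t *\<^sub>R x0) \<le> norm x0" using that by (simp add: mult_left_le_one_le)
      then show ?thesis using nx0 by simp
    qed
    define T where "T = {0..1} \<inter> (\<lambda>t. z (t *\<^sub>R x0)) -` {0}"
    have "continuous_on S z" using dz differentiable_imp_continuous_on by blast
    then have "continuous_on {0..1} (\<lambda>t. z (t *\<^sub>R x0))"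
      by (rule continuous_on_compose2) (use inb S(2) in \<open>auto intro!: continuous_intros\<close>)
    then have "closed T" unfolding T_def by (rule continuous_closed_preimage) auto
    have "0 \<in> T" using assms(6) by (simp add: T_def)
    have "bdd_above T" unfolding T_def by (rule bdd_aboveI[of _ 1]) auto
    define ts where "ts = Sup T"
    have "ts \<in> T" unfolding ts_def using closed_contains_Sup \<open>0 \<in> T\<close> \<open>bdd_above T\<close> \<open>closed T\<close> by blast
    then have ts: "0 \<le> ts" "ts \<le> 1" "z (ts *\<^sub>R x0) = 0" by (auto simp: T_def)
    have "ts \<noteq> 1" using ts zx0 by auto
    then have "ts < 1" using ts by simp
    have pos: "z (s *\<^sub>R x0) > 0" if "ts < s" "s \<le> 1" for s
    proof -
      have "s \<notin> T" using that cSup_upper[OF _ \<open>bdd_above T\<close>, of s] ts_def by force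
      then have "z (s *\<^sub>R x0) \<noteq> 0" using that ts by (auto simp: T_def)
      moreover have "z (s *\<^sub>R x0) \<ge> 0" using nn inb[of s] that ts by auto
      ultimately show ?thesis by simp
    qed
    define \<eta> where "\<eta> = min (1 - ts) ((\<rho> - norm x0) / (2 * (norm x0 + 1)))"
    have nx1: "norm x0 + 1 > 0" using norm_ge_zero[of x0] by linarith
    have "\<eta> > 0" using \<open>ts < 1\<close> nx0 nx1 by (simp add: \<eta>_def)
    have "\<eta> \<le> 1 - ts" by (simp add: \<eta>_def)
    have "\<eta> * norm x0 < \<rho> - norm x0"
    proof -
      have "\<eta> * norm x0 \<le> (\<rho> - norm x0) / (2 * (norm x0 + 1)) * norm x0"
        unfolding \<eta>_def by (intro mult_right_mono) auto
      also have "\<dots> \<le> (\<rho> - norm x0) / (2 * (norm x0 + 1)) * (norm x0 + 1)"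
        using nx0 nx1 by (intro mult_left_mono) auto
      also have "\<dots> = (\<rho> - norm x0) / 2" using nx1 by (simp add: field_simps)
      also have "\<dots> < \<rho> - norm x0" using nx0 by simp
      finally show ?thesis .
    qed
    define s where "s = ts + \<eta>"
    define q where "q = s *\<^sub>R x0"
    define p where "p = ts *\<^sub>R x0"
    define R where "R = norm (p - q)"
    have "p - q = (- \<eta>) *\<^sub>R x0" by (simp add: p_def q_def s_def algebra_simps)
    then have R: "R = \<eta> * norm x0" using \<open>\<eta> > 0\<close> by (simp add: R_def)
    have "R > 0" using R \<open>\<eta> > 0\<close> \<open>x0 \<noteq> 0\<close> by simp
    have "s \<le> 1" "ts < s" using \<open>\<eta> \<le> 1 - ts\<close> \<open>\<eta> > 0\<close> by (auto simp: s_def)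
    have "cball q R \<subseteq> ball 0 \<rho>"
    proof
      fix y assume "y \<in> cball q R"
      then have "norm (y - q) \<le> R" by (simp add: dist_norm norm_minus_commute)
      moreover have "norm q \<le> norm x0" unfolding q_def using \<open>s \<le> 1\<close> \<open>ts < s\<close> ts
        by (simp add: mult_left_le_one_le)
      moreover have "norm y \<le> norm (y - q) + norm q" using norm_triangle_ineq[of "y - q" q] by simp
      ultimately show "y \<in> ball 0 \<rho>" using R \<open>\<eta> * norm x0 < \<rho> - norm x0\<close> by simp
    qed
    show False
    proof (rule hopf_contra[OF S(3) _ S(2) \<open>cball q R \<subseteq> ball 0 \<rho>\<close> nn])
      show "open (ball (0::real^'n) \<rho>)" by simp
      show "norm (p - q) = R" by (simp add: R_def)
      show "z p = 0" using ts by (simp add: p_def)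
      show "z q > 0" using pos[OF \<open>ts < s\<close> \<open>s \<le> 1\<close>] by (simp add: q_def)
      show "R > 0" by fact
    qed
  qed
qed

end
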